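(* Let $(X,\mu,H,\Pi,\mathcal{M}_0)$ be as in the Abstract Setting, and suppose there is $C<\infty$ with $\|\Pi f\|_{L^1(X,\mu)}\le C\|f\|_{L^1(X,\mu)}$ for all $f\in L^2(X,\mu)$. Then for every $x\in X$ there exists $\sigma_x\in\mathcal{M}_0$ such that $$\int_X f\,d\overline{\sigma_x}=f(x)\qquad\text{for all } f\in C(X)\cap H,$$ where $\overline{\sigma_x}$ denotes the complex conjugate measure.
   Context: Abstract Setting: $X$ is a compact connected Hausdorff space; $\mu$ is a finite regular Borel measure on $X$ of full support. $\mathcal{M}(X)$ is the space of regular complex Borel measures on $X$ (dual of $C(X)$) with the weak-$*$ topology; $L^1(X,\mu)\subset\mathcal{M}(X)$ via $f\mapsto f\,d\mu$. $H$ is a closed subspace of $L^2(X,\mu)$, $\Pi$ the orthogonal projection onto $H$, and $\mathcal{M}_0$ the weak-$*$ closure of $H$ in $\mathcal{M}(X)$. *)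

theory Defs
  imports "HOL-Analysis.Analysis"
begin

definition cfun :: "('a::topological_space \<Rightarrow> complex) set" where
  "cfun = {f. continuous_on UNIV f}"

definition sup_norm :: "('a \<Rightarrow> complex) \<Rightarrow> real" where
  "sup_norm f = (SUP x. cmod (f x))"

text \<open>M(X), the dual of C(X): bounded complex-linear functionals on C(X)
  (identified with regular complex Borel measures by the Riesz representation theorem).\<close>
definition meas_dual :: "(('a::topological_space \<Rightarrow> complex) \<Rightarrow> complex) set" where
  "meas_dual = {\<Lambda>. (\<forall>f\<in>cfun. \<forall>g\<in>cfun. \<forall>a b. \<Lambda> (\<lambda>x. a * f x + b * g x) = a * \<Lambda> f + b * \<Lambda> g)
                 \<and> (\<exists>B. \<forall>f\<in>cfun. cmod (\<Lambda> f) \<le> B * sup_norm f)}"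

definition regular_measure :: "'a::topological_space measure \<Rightarrow> bool" where
  "regular_measure M \<longleftrightarrow> (\<forall>A\<in>sets M.
       emeasure M A = (INF U\<in>{U. open U \<and> A \<subseteq> U}. emeasure M U) \<and>
       emeasure M A = (SUP K\<in>{K. compact K \<and> K \<subseteq> A}. emeasure M K))"

definition full_support :: "'a::topological_space measure \<Rightarrow> bool" where
  "full_support M \<longleftrightarrow> (\<forall>U. open U \<and> U \<noteq> {} \<longrightarrow> emeasure M U > 0)"

definition L2 :: "'a measure \<Rightarrow> ('a \<Rightarrow> complex) set" where
  "L2 M = {f. f \<in> borel_measurable M \<and> integrable M (\<lambda>x. (cmod (f x))\<^sup>2)}"

definition L1_norm :: "'a measure \<Rightarrow> ('a \<Rightarrow> complex) \<Rightarrow> real" where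
  "L1_norm M f = (LINT x|M. cmod (f x))"

definition L2_inner :: "'a measure \<Rightarrow> ('a \<Rightarrow> complex) \<Rightarrow> ('a \<Rightarrow> complex) \<Rightarrow> complex" where
  "L2_inner M f g = (LINT x|M. f x * cnj (g x))"

definition closed_L2_subspace :: "'a measure \<Rightarrow> ('a \<Rightarrow> complex) set \<Rightarrow> bool" where
  "closed_L2_subspace M H \<longleftrightarrow>
     H \<subseteq> L2 M \<and>
     (\<lambda>x. 0) \<in> H \<and>
     (\<forall>f\<in>H. \<forall>g\<in>H. \<forall>a b. (\<lambda>x. a * f x + b * g x) \<in> H) \<and>
     (\<forall>f\<in>H. \<forall>g\<in>L2 M. (AE x in M. g x = f x) \<longrightarrow> g \<in> H) \<and>
     (\<forall>h f. (\<forall>n. h n \<in> H) \<and> f \<in> L2 M \<and>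
            ((\<lambda>n. LINT x|M. (cmod (h n x - f x))\<^sup>2) \<longlonglongrightarrow> 0) \<longrightarrow> f \<in> H)"

definition orth_proj :: "'a measure \<Rightarrow> ('a \<Rightarrow> complex) set \<Rightarrow> (('a \<Rightarrow> complex) \<Rightarrow> ('a \<Rightarrow> complex)) \<Rightarrow> bool" where
  "orth_proj M H P \<longleftrightarrow>
     (\<forall>f\<in>L2 M. P f \<in> H \<and> (\<forall>h\<in>H. L2_inner M (\<lambda>x. f x - P f x) h = 0))"

definition L1_functional :: "'a measure \<Rightarrow> ('a \<Rightarrow> complex) \<Rightarrow> ('a \<Rightarrow> complex) \<Rightarrow> complex" where
  "L1_functional M h = (\<lambda>g. LINT x|M. g x * h x)"

text \<open>M_0: weak-* closure of H in M(X) (basic weak-* neighbourhoods are given by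
  finitely many continuous test functions and a tolerance).\<close>
definition wstar_closure :: "'a::topological_space measure \<Rightarrow> ('a \<Rightarrow> complex) set \<Rightarrow> (('a \<Rightarrow> complex) \<Rightarrow> complex) set" where
  "wstar_closure M H = {\<sigma>\<in>meas_dual. \<forall>F \<epsilon>. finite F \<and> F \<subseteq> cfun \<and> \<epsilon> > 0 \<longrightarrow>
       (\<exists>h\<in>H. \<forall>g\<in>F. cmod (\<sigma> g - L1_functional M h g) < \<epsilon>)}"

text \<open>Integral of f against the conjugate measure: \<integral> f d(conj \<sigma>) = conj (\<integral> conj f d\<sigma>).\<close>
definition conj_integral :: "(('a \<Rightarrow> complex) \<Rightarrow> complex) \<Rightarrow> ('a \<Rightarrow> complex) \<Rightarrow> complex" where
  "conj_integral \<sigma> f = cnj (\<sigma> (\<lambda>x. cnj (f x)))"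

end

theory Submission imports Defs begin


locale setting =
  fixes M :: "'a::t2_space measure" and H P C
  assumes cpt: "compact (UNIV :: 'a set)"
    and sets: "sets M = sets borel"
    and fin: "emeasure M UNIV < \<infinity>"
    and fs: "full_support M"
    and cl: "closed_L2_subspace M H"
    and op: "orth_proj M H P"
    and bd: "\<forall>f\<in>L2 M. L1_norm M (P f) \<le> C * L1_norm M f"
begin

lemma space_M[simp]: "space M = UNIV"
  using sets_eq_imp_space_eq[OF sets] by simp

lemma finM: "finite_measure M"
  by (rule finite_measureI) (use fin in auto)

lemma meas_borel: "f \<in> borel_measurable borel \<Longrightarrow> f \<in> borel_measurable M"
  by (subst measurable_cong_sets[OF sets refl])

lemma sets_M_open: "open U \<Longrightarrow> U \<in> sets M"
  using sets by auto

lemma cfun_meas: "(g::'a\<Rightarrow>complex) \<in> cfun \<Longrightarrow> g \<in> borel_measurable M"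
  by (rule meas_borel, rule borel_measurable_continuous_onI) (simp add: cfun_def)

lemma cfun_bound: assumes "(g::'a\<Rightarrow>complex) \<in> cfun" shows "cmod (g y) \<le> sup_norm g"
proof -
  have "compact (range g)"
    by (intro compact_continuous_image) (use assms cpt in \<open>auto simp: cfun_def\<close>)
  then obtain B where "\<forall>z\<in>range g. norm z \<le> B"
    using compact_imp_bounded bounded_iff by metis
  then have "bdd_above (range (\<lambda>y. cmod (g y)))" by (auto intro!: bdd_aboveI)
  then show ?thesis unfolding sup_norm_def by (intro cSUP_upper) simp_all
qed

lemma sup_norm_nonneg: "(g::'a\<Rightarrow>complex) \<in> cfun \<Longrightarrow> 0 \<le> sup_norm g"
  using cfun_bound[of g undefined] norm_ge_zero order_trans by blast

lemma L2_integrable: assumes "h \<in> L2 M" shows "integrable M h"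
proof -
  interpret finite_measure M by (rule finM)
  have i: "integrable M (\<lambda>y. 1 + (cmod (h y))\<^sup>2)"
    using assms by (auto simp: L2_def)
  show ?thesis
  proof (rule Bochner_Integration.integrable_bound[OF i])
    show "h \<in> borel_measurable M" using assms by (auto simp: L2_def)
    show "AE x in M. norm (h x) \<le> norm (1 + (cmod (h x))\<^sup>2)"
    proof (rule AE_I2)
      fix x
      have "cmod (h x) \<le> 1 + (cmod (h x))\<^sup>2"
      proof -
        have "0 \<le> (cmod (h x) - 1)^2" by simp
        then have "2 * cmod (h x) \<le> 1 + cmod (h x) * cmod (h x)" by (simp add: power2_eq_square algebra_simps)
        moreover have "0 \<le> cmod (h x)" by simp
        ultimately show ?thesis unfolding power2_eq_square by linarith
      qed
      then show "norm (h x) \<le> norm (1 + (cmod (h x))\<^sup>2)" by simp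
    qed
  qed
qed

lemma prod_integrable: assumes "(g::'a\<Rightarrow>complex) \<in> cfun" "integrable M h" shows "integrable M (\<lambda>y. g y * h y)"
proof (rule Bochner_Integration.integrable_bound)
  show "integrable M (\<lambda>y. complex_of_real (sup_norm g) * h y)" using assms(2) by simp
  show "(\<lambda>y. g y * h y) \<in> borel_measurable M"
    using assms cfun_meas borel_measurable_integrable by (intro borel_measurable_times) auto
  show "AE x in M. norm (g x * h x) \<le> norm (complex_of_real (sup_norm g) * h x)"
    using cfun_bound[OF assms(1)] sup_norm_nonneg[OF assms(1)]
    by (auto simp: norm_mult intro!: mult_right_mono)
qed

lemma prod_bound: assumes "(g::'a\<Rightarrow>complex) \<in> cfun" "integrable M h"
  shows "cmod (LINT y|M. g y * h y) \<le> sup_norm g * L1_norm M h"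
proof -
  have "cmod (LINT y|M. g y * h y) \<le> (LINT y|M. cmod (g y * h y))"
    by (rule Bochner_Integration.integral_norm_bound)
  also have "\<dots> \<le> (LINT y|M. sup_norm g * cmod (h y))"
    using assms prod_integrable[OF assms, THEN integrable_norm] cfun_bound
    by (intro integral_mono) (auto simp: norm_mult intro!: mult_right_mono)
  also have "\<dots> = sup_norm g * L1_norm M h" by (simp add: L1_norm_def)
  finally show ?thesis .
qed

definition phiR :: "'a set \<Rightarrow> 'a \<Rightarrow> real" where
  "phiR W = (\<lambda>y. indicator W y / measure M W)"
definition phiW :: "'a set \<Rightarrow> 'a \<Rightarrow> complex" where
  "phiW W = (\<lambda>y. complex_of_real (phiR W y))"

lemma meas_pos: assumes "open W" "x \<in> W" shows "0 < measure M W"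
proof -
  interpret finite_measure M by (rule finM)
  have "emeasure M W > 0" using fs assms by (auto simp: full_support_def)
  then show ?thesis using emeasure_eq_measure[of W] by simp
qed

lemma phiR_nonneg: "open W \<Longrightarrow> x \<in> W \<Longrightarrow> 0 \<le> phiR W y"
  using meas_pos[of W x] by (auto simp: phiR_def)

lemma phiR_meas: "open W \<Longrightarrow> phiR W \<in> borel_measurable M"
  unfolding phiR_def using sets_M_open[of W] by measurable

lemma phiR_int: assumes "open W" shows "integrable M (phiR W)"
proof -
  interpret finite_measure M by (rule finM)
  have "integrable M (\<lambda>y. indicator W y / measure M W :: real)"
    using sets_M_open[OF assms] by (intro integrable_divide integrable_real_indicator) (auto simp: less_top[symmetric])
  then show ?thesis by (simp add: phiR_def)
qed

lemma phiR_integral: assumes "open W" "x \<in> W" shows "(LINT y|M. phiR W y) = 1"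
proof -
  interpret finite_measure M by (rule finM)
  have "(LINT y|M. phiR W y) = (LINT y|M. indicator W y) / measure M W"
    by (simp add: phiR_def)
  also have "\<dots> = 1" using meas_pos[OF assms] sets_M_open[OF assms(1)] by simp
  finally show ?thesis .
qed

lemma phiW_L2: assumes "open W" "x \<in> W" shows "phiW W \<in> L2 M"
proof -
  interpret finite_measure M by (rule finM)
  have "integrable M (\<lambda>y. phiR W y * (1 / measure M W))"
    using phiR_int[OF assms(1)] by simp
  moreover have "(cmod (phiW W y))\<^sup>2 = phiR W y * (1 / measure M W)" for y
    using meas_pos[OF assms] by (auto simp: phiW_def phiR_def power2_eq_square indicator_def norm_divide)
  ultimately show ?thesis using phiR_meas[OF assms(1)] by (simp add: L2_def phiW_def)
qed

lemma L1_phiW: assumes "open W" "x \<in> W" shows "L1_norm M (phiW W) = 1"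
  using phiR_integral[OF assms] phiR_nonneg[OF assms] by (simp add: L1_norm_def phiW_def)

definition LamW :: "'a set \<Rightarrow> ('a \<Rightarrow> complex) \<Rightarrow> complex" where
  "LamW W = (\<lambda>g. if g \<in> cfun then LINT y|M. g y * P (phiW W) y else 0)"

lemma PW: assumes "open W" "x \<in> W"
  shows "P (phiW W) \<in> H" "integrable M (P (phiW W))"
proof -
  show 1: "P (phiW W) \<in> H" using op phiW_L2[OF assms] unfolding orth_proj_def by blast
  have "H \<subseteq> L2 M" using cl unfolding closed_L2_subspace_def by blast
  then show "integrable M (P (phiW W))"
    using 1 L2_integrable by blast
qed

lemma LamW_bound: assumes "open W" "x \<in> W" "g \<in> cfun"
  shows "cmod (LamW W g) \<le> max C 0 * sup_norm g"
proof -
  have "cmod (LamW W g) \<le> sup_norm g * L1_norm M (P (phiW W))"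
    using prod_bound[OF assms(3) PW(2)[OF assms(1,2)]] assms(3) by (simp add: LamW_def)
  also have "\<dots> \<le> sup_norm g * C"
    using bd phiW_L2[OF assms(1,2)] L1_phiW[OF assms(1,2)] sup_norm_nonneg[OF assms(3)]
    by (intro mult_left_mono) auto
  also have "\<dots> \<le> max C 0 * sup_norm g"
    using sup_norm_nonneg[OF assms(3)] mult_left_mono[of C "max C 0" "sup_norm g"] by (simp add: mult.commute)
  finally show ?thesis .
qed

lemma cfun_lin: "(f::'a\<Rightarrow>complex) \<in> cfun \<Longrightarrow> g \<in> cfun \<Longrightarrow> (\<lambda>y. a * f y + b * g y) \<in> cfun"
  by (auto simp: cfun_def intro!: continuous_intros)

lemma LamW_lin: assumes "open W" "x \<in> W" "f \<in> cfun" "g \<in> cfun"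
  shows "LamW W (\<lambda>y. a * f y + b * g y) = a * LamW W f + b * LamW W g"
proof -
  have i1: "integrable M (\<lambda>y. f y * P (phiW W) y)" and i2: "integrable M (\<lambda>y. g y * P (phiW W) y)"
    using prod_integrable PW(2)[OF assms(1,2)] assms(3,4) by auto
  have "(LINT y|M. (a * f y + b * g y) * P (phiW W) y)
      = (LINT y|M. a * (f y * P (phiW W) y) + b * (g y * P (phiW W) y))"
    by (rule Bochner_Integration.integral_cong) (simp_all add: algebra_simps)
  also have "\<dots> = a * (LINT y|M. f y * P (phiW W) y) + b * (LINT y|M. g y * P (phiW W) y)"
    using i1 i2 by simp
  finally show ?thesis using assms cfun_lin[OF assms(3,4)] by (simp add: LamW_def)
qed

lemma LamW_ident: assumes "open W" "x \<in> W" "f \<in> cfun" "f \<in> H"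
    and sub: "W \<subseteq> {y. cmod (f y - f x) < e}"
  shows "cmod (LamW W (\<lambda>y. cnj (f y)) - cnj (f x)) \<le> e"
proof -
  interpret finite_measure M by (rule finM)
  have cf: "(\<lambda>y. cnj (f y)) \<in> cfun" using assms(3) by (auto simp: cfun_def intro!: continuous_intros)
  have iP: "integrable M (\<lambda>y. cnj (f y) * P (phiW W) y)"
    using prod_integrable[OF cf PW(2)[OF assms(1,2)]] .
  have iphiR: "integrable M (phiW W)" using phiR_int[OF assms(1)] by (simp add: phiW_def)
  have iphi: "integrable M (\<lambda>y. cnj (f y) * phiW W y)"
    using prod_integrable[OF cf iphiR] .
  have orth: "L2_inner M (\<lambda>y. phiW W y - P (phiW W) y) f = 0"
    using op phiW_L2[OF assms(1,2)] assms(4) unfolding orth_proj_def by blast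
  have "(LINT y|M. (phiW W y - P (phiW W) y) * cnj (f y))
      = (LINT y|M. cnj (f y) * phiW W y - cnj (f y) * P (phiW W) y)"
    by (rule Bochner_Integration.integral_cong) (simp_all add: algebra_simps)
  also have "\<dots> = (LINT y|M. cnj (f y) * phiW W y) - (LINT y|M. cnj (f y) * P (phiW W) y)"
    by (rule Bochner_Integration.integral_diff[OF iphi iP])
  finally have "(LINT y|M. cnj (f y) * phiW W y) - (LINT y|M. cnj (f y) * P (phiW W) y)
      = (LINT y|M. (phiW W y - P (phiW W) y) * cnj (f y))" by simp
  also have "\<dots> = 0" using orth by (simp add: L2_inner_def)
  finally have eq1: "LamW W (\<lambda>y. cnj (f y)) = (LINT y|M. cnj (f y) * phiW W y)"
    using cf by (simp add: LamW_def)
  have "(LINT y|M. cnj (f x) * phiW W y) = cnj (f x)"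
    using phiR_integral[OF assms(1,2)] by (simp add: phiW_def)
  moreover have "(LINT y|M. (cnj (f y) - cnj (f x)) * phiW W y)
      = (LINT y|M. cnj (f y) * phiW W y - cnj (f x) * phiW W y)"
    by (rule Bochner_Integration.integral_cong) (simp_all add: algebra_simps)
  moreover have "(LINT y|M. cnj (f y) * phiW W y - cnj (f x) * phiW W y)
      = (LINT y|M. cnj (f y) * phiW W y) - (LINT y|M. cnj (f x) * phiW W y)"
    using iphi iphiR by (intro Bochner_Integration.integral_diff) auto
  ultimately have "LamW W (\<lambda>y. cnj (f y)) - cnj (f x) = (LINT y|M. (cnj (f y) - cnj (f x)) * phiW W y)"
    using eq1 by simp
  also have "cmod \<dots> \<le> (LINT y|M. cmod ((cnj (f y) - cnj (f x)) * phiW W y))"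
    by (rule Bochner_Integration.integral_norm_bound)
  also have "\<dots> \<le> (LINT y|M. e * phiR W y)"
  proof (rule integral_mono)
    show "integrable M (\<lambda>y. cmod ((cnj (f y) - cnj (f x)) * phiW W y))"
    proof (intro integrable_norm)
      have "integrable M (\<lambda>y. cnj (f y) * phiW W y - cnj (f x) * phiW W y)"
        using iphi iphiR by (intro Bochner_Integration.integrable_diff) auto
      then show "integrable M (\<lambda>y. (cnj (f y) - cnj (f x)) * phiW W y)"
        by (simp add: left_diff_distrib)
    qed
    show "integrable M (\<lambda>y. e * phiR W y)" using phiR_int[OF assms(1)] by simp
    fix y
    show "cmod ((cnj (f y) - cnj (f x)) * phiW W y) \<le> e * phiR W y"
    proof (cases "y \<in> W")
      case True
      then have "cmod (cnj (f y) - cnj (f x)) \<le> e" using sub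
        by (metis (mono_tags, lifting) complex_cnj_diff complex_mod_cnj less_eq_real_def mem_Collect_eq subsetD)
      then show ?thesis using phiR_nonneg[OF assms(1,2), of y]
        by (simp add: phiW_def norm_mult mult_right_mono)
    next
      case False
      then show ?thesis by (simp add: phiW_def phiR_def)
    qed
  qed
  also have "\<dots> = e" using phiR_integral[OF assms(1,2)] by simp
  finally show ?thesis .
qed

end

lemma coord_cont[continuous_intros]: "continuous_on S (\<lambda>\<Lambda>::('b\<Rightarrow>'c::topological_space). \<Lambda> g)"
  by (rule continuous_on_subset[OF continuous_on_product_coordinates]) simp

theorem lemma3p2:
  fixes M :: "'a::t2_space measure"
    and H :: "('a \<Rightarrow> complex) set"
    and P :: "('a \<Rightarrow> complex) \<Rightarrow> ('a \<Rightarrow> complex)"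
    and C :: real
  assumes "compact (UNIV :: 'a set)" and "connected (UNIV :: 'a set)"
    and "sets M = sets borel"
    and "emeasure M UNIV < \<infinity>"
    and "regular_measure M"
    and "full_support M"
    and "closed_L2_subspace M H"
    and "orth_proj M H P"
    and "\<forall>f\<in>L2 M. L1_norm M (P f) \<le> C * L1_norm M f"
  shows "\<forall>x. \<exists>\<sigma>\<in>wstar_closure M H.
           \<forall>f. f \<in> cfun \<and> f \<in> H \<longrightarrow> conj_integral \<sigma> f = f x"
proof
  fix x :: 'a
  interpret S: setting M H P C
    by (rule setting.intro) (use assms in blast)+
  define B where "B g = (if g \<in> cfun then max C 0 * sup_norm g else 0)" for g :: "'a \<Rightarrow> complex"
  define KB where "KB = PiE UNIV (\<lambda>g. cball (0::complex) (B g))"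
  have KBiff: "\<Lambda> \<in> KB \<longleftrightarrow> (\<forall>g. \<Lambda> g \<in> cball 0 (B g))" for \<Lambda>
    by (simp add: KB_def PiE_iff)
  have cKB: "compact KB"
  proof -
    have "compactin (product_topology (\<lambda>_. euclidean) UNIV) KB"
      unfolding KB_def compactin_PiE by auto
    then show ?thesis by (simp add: euclidean_product_topology)
  qed
  define Wset where "Wset V = {W. open W \<and> x \<in> W \<and> W \<subseteq> V}" for V
  define Fam where "Fam = (\<lambda>V. closure (S.LamW ` Wset V)) ` {V. open V \<and> x \<in> V}"
  have LKB: "S.LamW W \<in> KB" if "open W" "x \<in> W" for W
    unfolding KBiff
  proof
    fix g show "S.LamW W g \<in> cball 0 (B g)"
      using S.LamW_bound[OF that, of g] by (auto simp: B_def S.LamW_def)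
  qed
  have "KB \<inter> \<Inter>Fam \<noteq> {}"
  proof (rule compact_imp_fip[OF cKB])
    show "closed T" if "T \<in> Fam" for T using that unfolding Fam_def by blast
    fix F' assume F': "finite F'" "F' \<subseteq> Fam"
    then obtain VV where VV: "VV \<subseteq> {V. open V \<and> x \<in> V}" "finite VV"
        "F' = (\<lambda>V. closure (S.LamW ` Wset V)) ` VV"
      unfolding Fam_def by (meson finite_subset_image)
    define V0 where "V0 = \<Inter>VV"
    have V0: "open V0" "x \<in> V0" using VV by (auto simp: V0_def)
    have "S.LamW V0 \<in> KB \<inter> \<Inter>F'"
    proof -
      have "S.LamW V0 \<in> closure (S.LamW ` Wset V)" if "V \<in> VV" for V
      proof -
        have "V0 \<in> Wset V" using V0 that by (auto simp: Wset_def V0_def)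
        then show ?thesis by (meson closure_subset image_eqI subsetD)
      qed
      then show ?thesis using LKB[OF V0] VV(3) by auto
    qed
    then show "KB \<inter> \<Inter>F' \<noteq> {}" by blast
  qed
  then obtain \<sigma> where \<sigma>KB: "\<sigma> \<in> KB" and \<sigma>F: "\<sigma> \<in> \<Inter>Fam" by blast
  have \<sigma>cl: "\<sigma> \<in> closure (S.LamW ` Wset V)" if "open V" "x \<in> V" for V
    using \<sigma>F that by (auto simp: Fam_def)
  have lin: "\<sigma> (\<lambda>y. a * f y + b * g y) = a * \<sigma> f + b * \<sigma> g" if "f \<in> cfun" "g \<in> cfun" for f g a b
  proof -
    have "closed {\<Lambda>::('a\<Rightarrow>complex)\<Rightarrow>complex. \<Lambda> (\<lambda>y. a * f y + b * g y) = a * \<Lambda> f + b * \<Lambda> g}"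
      by (intro closed_Collect_eq continuous_intros)
    moreover have "S.LamW ` Wset UNIV \<subseteq> {\<Lambda>. \<Lambda> (\<lambda>y. a * f y + b * g y) = a * \<Lambda> f + b * \<Lambda> g}"
      using S.LamW_lin that by (auto simp: Wset_def)
    ultimately have "closure (S.LamW ` Wset UNIV) \<subseteq> {\<Lambda>. \<Lambda> (\<lambda>y. a * f y + b * g y) = a * \<Lambda> f + b * \<Lambda> g}"
      by (rule closure_minimal[rotated])
    then show ?thesis using \<sigma>cl[of UNIV] by auto
  qed
  have bnd: "cmod (\<sigma> f) \<le> max C 0 * sup_norm f" if "f \<in> cfun" for f
    proof -
    have "\<sigma> f \<in> cball 0 (B f)" using \<sigma>KB unfolding KBiff by blast
    then show ?thesis using that by (simp add: B_def)
  qed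
  have dual: "\<sigma> \<in> meas_dual"
    unfolding meas_dual_def
  proof (intro CollectI conjI ballI allI lin exI[of _ "max C 0"])
    fix f :: "'a \<Rightarrow> complex" assume "f \<in> cfun" then show "cmod (\<sigma> f) \<le> max C 0 * sup_norm f" by (rule bnd)
  qed
  have rep: "\<sigma> (\<lambda>y. cnj (f y)) = cnj (f x)" if "f \<in> cfun" "f \<in> H" for f
  proof -
    have "cmod (\<sigma> (\<lambda>y. cnj (f y)) - cnj (f x)) \<le> e" if "e > 0" for e
    proof -
      define V where "V = {y. cmod (f y - f x) < e}"
      have oV: "open V" unfolding V_def
      proof (rule open_Collect_less)
        have "continuous_on UNIV f" using \<open>f \<in> cfun\<close> by (simp add: cfun_def)
        then show "continuous_on UNIV (\<lambda>y. cmod (f y - f x))"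
          by (intro continuous_on_norm continuous_on_diff continuous_on_const)
      qed simp
      have xV: "x \<in> V" using that by (simp add: V_def)
      have "closed {\<Lambda>::('a\<Rightarrow>complex)\<Rightarrow>complex. cmod (\<Lambda> (\<lambda>y. cnj (f y)) - cnj (f x)) \<le> e}"
        by (intro closed_Collect_le continuous_on_norm continuous_on_diff continuous_on_const coord_cont)
      moreover have "S.LamW ` Wset V \<subseteq> {\<Lambda>. cmod (\<Lambda> (\<lambda>y. cnj (f y)) - cnj (f x)) \<le> e}"
      proof
        fix L assume "L \<in> S.LamW ` Wset V"
        then obtain W where "W \<in> Wset V" "L = S.LamW W" by blast
        then have "open W" "x \<in> W" "W \<subseteq> {y. cmod (f y - f x) < e}" by (auto simp: Wset_def V_def)
        from S.LamW_ident[OF this(1,2) \<open>f \<in> cfun\<close> \<open>f \<in> H\<close> this(3)] \<open>L = S.LamW W\<close>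
        show "L \<in> {\<Lambda>. cmod (\<Lambda> (\<lambda>y. cnj (f y)) - cnj (f x)) \<le> e}" by simp
      qed
      ultimately have "closure (S.LamW ` Wset V) \<subseteq> {\<Lambda>. cmod (\<Lambda> (\<lambda>y. cnj (f y)) - cnj (f x)) \<le> e}"
        by (rule closure_minimal[rotated])
      then show ?thesis using \<sigma>cl[OF oV xV] by blast
    qed
    then have "cmod (\<sigma> (\<lambda>y. cnj (f y)) - cnj (f x)) \<le> 0"
      by (rule field_le_epsilon) (use \<open>\<And>e. e > 0 \<Longrightarrow> _\<close> in simp)
    then show ?thesis by simp
  qed
  have wc: "\<sigma> \<in> wstar_closure M H"
    unfolding wstar_closure_def
  proof (intro CollectI conjI dual allI impI)
    fix F :: "('a \<Rightarrow> complex) set" and \<epsilon> :: real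
    assume asm: "finite F \<and> F \<subseteq> cfun \<and> \<epsilon> > 0"
    define Ob where "Ob = {\<Lambda>. \<forall>g\<in>F. \<Lambda> (id g) \<in> ball (\<sigma> g) \<epsilon>}"
    have "open Ob" unfolding Ob_def using asm by (intro product_topology_basis') auto
    moreover have "\<sigma> \<in> Ob" using asm by (auto simp: Ob_def)
    ultimately have "S.LamW ` Wset UNIV \<inter> Ob \<noteq> {}"
      using \<sigma>cl[of UNIV] unfolding closure_iff_nhds_not_empty by blast
    then obtain W where W: "W \<in> Wset UNIV" "S.LamW W \<in> Ob" by blast
    have oW: "open W" "x \<in> W" using W(1) by (auto simp: Wset_def)
    show "\<exists>h\<in>H. \<forall>g\<in>F. cmod (\<sigma> g - L1_functional M h g) < \<epsilon>"
    proof (intro bexI ballI)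
      show "P (S.phiW W) \<in> H" by (rule S.PW(1)[OF oW])
      fix g assume "g \<in> F"
      then have "g \<in> cfun" "dist (\<sigma> g) (S.LamW W g) < \<epsilon>" using W(2) asm by (auto simp: Ob_def)
      then show "cmod (\<sigma> g - L1_functional M (P (S.phiW W)) g) < \<epsilon>"
        by (simp add: S.LamW_def L1_functional_def dist_norm)
    qed
  qed
  show "\<exists>\<sigma>\<in>wstar_closure M H. \<forall>f. f \<in> cfun \<and> f \<in> H \<longrightarrow> conj_integral \<sigma> f = f x"
  proof (intro bexI[OF _ wc] allI impI)
    fix f assume "f \<in> cfun \<and> f \<in> H"
    then show "conj_integral \<sigma> f = f x" using rep[of f] by (simp add: conj_integral_def)
  qed
qed

end
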